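(* Let $u$ be a 5-complex number with $0<\theta_+<\pi/2$ and $0<\psi_1<\pi/2$. Then $$u=\rho\exp\left\{\frac15(h_1+h_2+h_3+h_4)\ln\frac{\sqrt2}{\tan\theta_+}+\left[\frac{\sqrt5+1}{10}(h_1+h_4)-\frac{\sqrt5-1}{10}(h_2+h_3)\right]\ln\tan\psi_1+\tilde e_1\phi_1+\tilde e_2\phi_2\right\},$$ where the exponential of a 5-complex number $w$ is $\exp w=\sum_{n\ge0}w^n/n!$.
   Context: A 5-complex number is $u=x_0+h_1x_1+h_2x_2+h_3x_3+h_4x_4$ with real $x_j$, with componentwise addition and the commutative associative bilinear multiplication determined by $h_jh_k=h_{(j+k)\bmod 5}$, $h_0=1$. Canonical variables: $v_+=\sum_{j=0}^4x_j$ and, for $k=1,2$, $v_k=\sum_j x_j\cos(2\pi kj/5)$, $\tilde v_k=\sum_jx_j\sin(2\pi kj/5)$. For $k=1,2$: $\rho_k^2=v_k^2+\tilde v_k^2$ ($\rho_k\ge0$), $\phi_k\in[0,2\pi)$ with $\cos\phi_k=v_k/\rho_k$, $\sin\phi_k=\tilde v_k/\rho_k$. Planar angle $\psi_1\in[0,\pi/2]$: $\tan\psi_1=\rho_1/\rho_2$. Polar angle $\theta_+\in[0,\pi]$: $\tan\theta_+=\sqrt2\rho_1/v_+$. Amplitude $\rho=(v_+\rho_1^2\rho_2^2)^{1/5}$. Canonical basis elements (with $h_0=1$): $\tilde e_k=\frac25\sum_{j=0}^4\sin(2\pi kj/5)\,h_j$ for $k=1,2$. *)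

theory Defs
  imports "HOL-Analysis.Analysis" "HOL-Library.Numeral_Type"
begin

text \<open>5-complex numbers: u = x0 + h1 x1 + ... + h4 x4, represented as vectors in real^5,
  component j (index of_nat j :: 5) being x_j.  Indices of type 5 add modulo 5.\<close>

type_synonym tc5 = "real ^ 5"

definition hc5 :: "nat \<Rightarrow> tc5" where
  "hc5 j = (\<chi> i. if i = (of_nat j :: 5) then 1 else 0)"

definition xc5 :: "tc5 \<Rightarrow> nat \<Rightarrow> real" where
  "xc5 u j = u $ (of_nat j :: 5)"

text \<open>Bilinear multiplication with h_j h_k = h_{(j+k) mod 5}.\<close>
definition mult5 :: "tc5 \<Rightarrow> tc5 \<Rightarrow> tc5" where
  "mult5 u v = (\<chi> k. \<Sum>i\<in>UNIV. u $ i * v $ (k - i))"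

fun pow5 :: "tc5 \<Rightarrow> nat \<Rightarrow> tc5" where
  "pow5 w 0 = hc5 0"
| "pow5 w (Suc n) = mult5 w (pow5 w n)"

definition exp5 :: "tc5 \<Rightarrow> tc5" where
  "exp5 w = (\<Sum>n. (1 / fact n) *\<^sub>R pow5 w n)"

definition vplus :: "tc5 \<Rightarrow> real" where
  "vplus u = (\<Sum>j<5. xc5 u j)"

definition vk :: "nat \<Rightarrow> tc5 \<Rightarrow> real" where
  "vk k u = (\<Sum>j<5. xc5 u j * cos (2 * pi * real k * real j / 5))"

definition vtk :: "nat \<Rightarrow> tc5 \<Rightarrow> real" where
  "vtk k u = (\<Sum>j<5. xc5 u j * sin (2 * pi * real k * real j / 5))"

definition rhok :: "nat \<Rightarrow> tc5 \<Rightarrow> real" where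
  "rhok k u = sqrt ((vk k u)\<^sup>2 + (vtk k u)\<^sup>2)"

definition amp5 :: "tc5 \<Rightarrow> real" where
  "amp5 u = root 5 (vplus u * (rhok 1 u)\<^sup>2 * (rhok 2 u)\<^sup>2)"

definition etilde :: "nat \<Rightarrow> tc5" where
  "etilde k = (2/5) *\<^sub>R (\<Sum>j<5. sin (2 * pi * real k * real j / 5) *\<^sub>R hc5 j)"

end

theory Submission
  imports Defs
begin

lemma U5: "(UNIV::5 set) = {0,1,2,3,4}"
proof -
  have "\<And>x::5. x \<in> {0,1,2,3,4}"
  proof -
    fix x :: 5
    show "x \<in> {0,1,2,3,4}"
    proof (induct x)
      case (of_int z)
      then have "z=0 \<or> z=1 \<or> z=2 \<or> z=3 \<or> z=4" by simp arith
      then show ?case by auto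
    qed
  qed
  then show ?thesis by auto
qed

lemma sum5: "(\<Sum>i\<in>(UNIV::5 set). f i) = f 0 + f 1 + f 2 + f 3 + f 4"
  unfolding U5 by (simp add: add.assoc)

lemma vec5_eqI: "(u::tc5)$0 = v$0 \<Longrightarrow> u$1 = v$1 \<Longrightarrow> u$2 = v$2 \<Longrightarrow> u$3 = v$3 \<Longrightarrow> u$4 = v$4 \<Longrightarrow> u = v"
proof -
  assume a: "u$0 = v$0" "u$1 = v$1" "u$2 = v$2" "u$3 = v$3" "u$4 = v$4"
  have "\<forall>i\<in>(UNIV::5 set). u$i = v$i" unfolding U5 using a by blast
  then show ?thesis by (simp add: vec_eq_iff)
qed

definition chi :: "complex \<Rightarrow> tc5 \<Rightarrow> complex" where
  "chi z u = of_real (u$0) + of_real (u$1) * z + of_real (u$2) * z^2 + of_real (u$3) * z^3 + of_real (u$4) * z^4"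

lemma neg5: "(-1::5) = 4" "(-2::5) = 3" "(-3::5) = 2" "(-4::5) = 1"
  "(5::5) = 0" "(6::5) = 1" "(7::5) = 2" "(8::5) = 3" "(9::5) = 4"
  by simp_all

lemma mult5_nth: "mult5 u v $ k = (\<Sum>i\<in>UNIV. u $ i * v $ (k - i))"
  by (simp add: mult5_def)

lemma poly5:
  fixes z a0 a1 a2 a3 a4 b0 b1 b2 b3 b4 :: complex
  assumes "z^5 = 1"
  shows "(a0*b0 + a1*b4 + a2*b3 + a3*b2 + a4*b1) + (a0*b1 + a1*b0 + a2*b4 + a3*b3 + a4*b2) * z
   + (a0*b2 + a1*b1 + a2*b0 + a3*b4 + a4*b3) * z^2 + (a0*b3 + a1*b2 + a2*b1 + a3*b0 + a4*b4) * z^3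
   + (a0*b4 + a1*b3 + a2*b2 + a3*b1 + a4*b0) * z^4
   = (a0 + a1*z + a2*z^2 + a3*z^3 + a4*z^4) * (b0 + b1*z + b2*z^2 + b3*z^3 + b4*z^4)"
  using assms by algebra

lemma chi_mult:
  assumes z5: "z^5 = 1"
  shows "chi z (mult5 u v) = chi z u * chi z v"
proof -
  have "mult5 u v $ 0 = u$0 * v$0 + u$1 * v$4 + u$2 * v$3 + u$3 * v$2 + u$4 * v$1"
       "mult5 u v $ 1 = u$0 * v$1 + u$1 * v$0 + u$2 * v$4 + u$3 * v$3 + u$4 * v$2"
       "mult5 u v $ 2 = u$0 * v$2 + u$1 * v$1 + u$2 * v$0 + u$3 * v$4 + u$4 * v$3"
       "mult5 u v $ 3 = u$0 * v$3 + u$1 * v$2 + u$2 * v$1 + u$3 * v$0 + u$4 * v$4"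
       "mult5 u v $ 4 = u$0 * v$4 + u$1 * v$3 + u$2 * v$2 + u$3 * v$1 + u$4 * v$0"
    by (simp_all add: mult5_nth sum5 neg5)
  then show ?thesis
    unfolding chi_def by (simp only: of_real_add of_real_mult poly5[OF z5])
qed

lemma chi_add: "chi z (u + v) = chi z u + chi z v"
  by (simp add: chi_def algebra_simps)
lemma chi_diff: "chi z (u - v) = chi z u - chi z v"
  by (simp add: chi_def algebra_simps)
lemma chi_scaleR: "chi z (a *\<^sub>R u) = of_real a * chi z u"
  by (simp add: chi_def algebra_simps)
lemma chi_hc5: "chi z (hc5 0) = 1" "chi z (hc5 1) = z" "chi z (hc5 2) = z^2"
  "chi z (hc5 3) = z^3" "chi z (hc5 4) = z^4"
  by (simp_all add: chi_def hc5_def)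

lemma chi_linear: "linear (chi z)"
proof (rule linearI)
  show "chi z (b1 + b2) = chi z b1 + chi z b2" for b1 b2 by (rule chi_add)
  show "chi z (r *\<^sub>R b) = r *\<^sub>R chi z b" for r b
    by (simp only: chi_scaleR) (simp add: scaleR_conv_of_real)
qed

lemma chi_bl: "bounded_linear (chi z)"
  using chi_linear linear_conv_bounded_linear by blast

lemma chi_pow: assumes "z^5 = 1" shows "chi z (pow5 w n) = (chi z w)^n"
  by (induct n) (simp_all add: chi_hc5 chi_mult[OF assms])

lemma mult5_norm: "norm (mult5 u v) \<le> 25 * (norm u * norm v)"
proof -
  have c: "\<bar>mult5 u v $ k\<bar> \<le> 5 * (norm u * norm v)" for k
  proof -
    have "\<bar>mult5 u v $ k\<bar> \<le> (\<Sum>i\<in>UNIV. \<bar>u $ i * v $ (k - i)\<bar>)"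
      unfolding mult5_nth by (rule sum_abs)
    also have "\<dots> \<le> (\<Sum>i\<in>(UNIV::5 set). norm u * norm v)"
      by (rule sum_mono) (simp add: abs_mult mult_mono component_le_norm_cart)
    also have "\<dots> = 5 * (norm u * norm v)" by simp
    finally show ?thesis .
  qed
  have "norm (mult5 u v) \<le> (\<Sum>k\<in>UNIV. \<bar>mult5 u v $ k\<bar>)" by (rule norm_le_l1_cart)
  also have "\<dots> \<le> (\<Sum>k\<in>(UNIV::5 set). 5 * (norm u * norm v))"
    by (rule sum_mono) (rule c)
  also have "\<dots> = 25 * (norm u * norm v)" by simp
  finally show ?thesis .
qed

lemma pow5_norm: "norm (pow5 w n) \<le> (25 * norm w)^n * norm (hc5 0)"
proof (induct n)
  case 0 then show ?case by simp
next
  case (Suc n)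
  have "norm (pow5 w (Suc n)) \<le> 25 * (norm w * norm (pow5 w n))"
    using mult5_norm by simp
  also have "\<dots> \<le> 25 * (norm w * ((25 * norm w)^n * norm (hc5 0)))"
    using Suc by (simp add: mult_left_mono)
  finally show ?case by (simp add: algebra_simps)
qed

lemma exp5_summable: "summable (\<lambda>n. (1 / fact n) *\<^sub>R pow5 w n)"
proof (rule summable_comparison_test')
  show "summable (\<lambda>n. ((25 * norm w)^n /\<^sub>R fact n) * norm (hc5 0))"
    by (rule summable_mult2) (rule summable_exp_generic)
  show "norm ((1 / fact n) *\<^sub>R pow5 w n) \<le> ((25 * norm w)^n /\<^sub>R fact n) * norm (hc5 0)" for n
  proof -
    have "norm ((1 / fact n) *\<^sub>R pow5 w n) = (1 / fact n) * norm (pow5 w n)" by simp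
    also have "\<dots> \<le> (1 / fact n) * ((25 * norm w)^n * norm (hc5 0))"
      by (rule mult_left_mono[OF pow5_norm]) simp
    finally show ?thesis by (simp add: divide_simps)
  qed
qed

lemma chi_exp5: assumes "z^5 = 1" shows "chi z (exp5 w) = exp (chi z w)"
proof -
  have "chi z (exp5 w) = (\<Sum>n. chi z ((1 / fact n) *\<^sub>R pow5 w n))"
    unfolding exp5_def by (rule bounded_linear.suminf[OF chi_bl exp5_summable])
  also have "\<dots> = (\<Sum>n. (chi z w)^n /\<^sub>R fact n)"
    by (simp only: chi_scaleR chi_pow[OF assms]) (simp add: scaleR_conv_of_real divide_inverse)
  finally show ?thesis by (simp add: exp_def)
qed

definition om :: complex where "om = cis (2 * pi / 5)"

lemma om_pow: "(om ^ k) ^ j = cis (2 * pi * real k * real j / 5)"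
proof -
  have "(om ^ k) ^ j = om ^ (k * j)" by (simp add: power_mult)
  also have "\<dots> = cis (real (k * j) * (2 * pi / 5))" unfolding om_def by (rule Complex.DeMoivre)
  finally show ?thesis by (simp add: mult.commute mult.left_commute)
qed

lemma om5: "om ^ 5 = 1"
  using om_pow[of 1 5] by simp

lemma om_ne1: "om \<noteq> 1"
proof
  assume "om = 1"
  then have "Im om = 0" by simp
  moreover have "sin (2 * pi / 5) > 0" by (rule sin_gt_zero) auto
  ultimately show False by (simp add: om_def)
qed

lemma omS: "1 + om + om^2 + om^3 + om^4 = 0"
proof -
  have "(om - 1) * (1 + om + om^2 + om^3 + om^4) = om^5 - 1" by algebra
  then have "(om - 1) * (1 + om + om^2 + om^3 + om^4) = 0" by (simp add: om5)
  then show ?thesis using om_ne1 by simp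
qed

lemma om_cnj: "cnj om = om ^ 4"
proof -
  have "om * cnj om = 1" unfolding om_def cis_cnj cis_mult by simp
  then show ?thesis using om5 by algebra
qed

lemma cos25: "cos (2 * pi / 5) > 0"
  by (rule cos_gt_zero_pi) (use pi_gt_zero in linarith)+

definition cc :: real where "cc = 2 * cos (2 * pi / 5)"

lemma cc_om: "om + om^4 = of_real cc"
proof -
  have "Re om = cos (2 * pi / 5)" by (simp add: om_def)
  then show ?thesis using complex_add_cnj[of om] unfolding om_cnj by (simp add: cc_def)
qed

lemma cc_val: "cc = (sqrt 5 - 1) / 2"
proof -
  have "of_real (cc^2 + cc - 1) = (om + om^4)^2 + (om + om^4) - (1::complex)"
    by (simp add: cc_om)
  also have "\<dots> = 0" using om5 omS by algebra
  finally have q: "cc^2 + cc - 1 = 0" by (simp only: of_real_eq_0_iff)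
  have p: "2 * cc + 1 > 0" using cos25 by (simp add: cc_def)
  have "(2 * cc + 1)^2 = 5" using q by algebra
  then have "sqrt 5 = 2 * cc + 1" using p by (metis abs_of_pos real_sqrt_abs)
  then show ?thesis by simp
qed

lemma sum_lt5: "(\<Sum>j<(5::nat). f j) = f 0 + f 1 + f 2 + f 3 + f 4"
  by (simp add: eval_nat_numeral add.assoc)

lemma chi_sum: "chi z u = (\<Sum>j<(5::nat). of_real (u $ of_nat j) * z^j)"
  unfolding sum_lt5 chi_def by simp

lemma cis_cs: "cis x = of_real (cos x) + \<i> * of_real (sin x)"
  by (simp add: complex_eq_iff)

lemma vk_chi: "of_real (vk k u) + \<i> * of_real (vtk k u) = chi (om ^ k) u"
proof -
  have "of_real (vk k u) + \<i> * of_real (vtk k u) =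
    (\<Sum>j<(5::nat). of_real (u $ of_nat j) * (of_real (cos (2 * pi * real k * real j / 5)) + \<i> * of_real (sin (2 * pi * real k * real j / 5))))"
    unfolding vk_def vtk_def xc5_def by (simp add: sum_distrib_left algebra_simps sum.distrib)
  also have "\<dots> = chi (om ^ k) u"
    unfolding chi_sum om_pow cis_cs by simp
  finally show ?thesis .
qed

lemma vplus_chi: "of_real (vplus u) = chi 1 u"
  unfolding vplus_def xc5_def chi_sum by simp

lemma sin_om: "of_real (sin (2 * pi * real k * real j / 5)) = ((om ^ k) ^ j - ((om ^ 4) ^ k) ^ j) / (2 * \<i>)"
proof -
  have "((om ^ 4) ^ k) ^ j = cnj ((om ^ k) ^ j)" by (simp add: om_cnj)
  then show ?thesis unfolding om_pow by (simp add: cis_cnj complex_eq_iff)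
qed

lemma chi_sumv: "chi z (\<Sum>j<(5::nat). f j) = (\<Sum>j<(5::nat). chi z (f j))"
  unfolding sum_lt5 by (simp add: chi_add)

lemma chi_et: "chi z (etilde k) = (1 / (5 * \<i>)) * (\<Sum>j<(5::nat). ((om ^ k) ^ j - ((om ^ 4) ^ k) ^ j) * z ^ j)"
proof -
  have h: "chi z (hc5 j) = z ^ j" if "j < 5" for j
  proof -
    have "j = 0 \<or> j = 1 \<or> j = 2 \<or> j = 3 \<or> j = 4" using that by auto
    then show ?thesis using chi_hc5 by auto
  qed
  have "chi z (etilde k) = of_real (2/5) * (\<Sum>j<(5::nat). of_real (sin (2 * pi * real k * real j / 5)) * z ^ j)"
    unfolding etilde_def chi_scaleR chi_sumv by (simp add: h chi_scaleR)
  also have "\<dots> = (1 / (5 * \<i>)) * (\<Sum>j<(5::nat). ((om ^ k) ^ j - ((om ^ 4) ^ k) ^ j) * z ^ j)"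
    unfolding sin_om sum_distrib_left by (intro sum.cong refl) (simp add: field_simps)
  finally show ?thesis .
qed

lemma et_vals:
  "chi 1 (etilde 1) = 0" "chi 1 (etilde 2) = 0"
  "chi om (etilde 1) = \<i>" "chi om (etilde 2) = 0"
  "chi (om^2) (etilde 1) = 0" "chi (om^2) (etilde 2) = \<i>"
proof -
  have "(\<Sum>j<(5::nat). ((om ^ 1) ^ j - ((om ^ 4) ^ 1) ^ j) * 1 ^ j) = 0"
    unfolding sum_lt5 power_one mult_1_right using om5 omS by algebra
  then show "chi 1 (etilde 1) = 0" unfolding chi_et by simp
  have "(\<Sum>j<(5::nat). ((om ^ 2) ^ j - ((om ^ 4) ^ 2) ^ j) * 1 ^ j) = 0"
    unfolding sum_lt5 power_one mult_1_right using om5 omS by algebra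
  then show "chi 1 (etilde 2) = 0" unfolding chi_et by simp
  have "(\<Sum>j<(5::nat). ((om ^ 1) ^ j - ((om ^ 4) ^ 1) ^ j) * om ^ j) = -5"
    unfolding sum_lt5 using om5 omS by algebra
  then show "chi om (etilde 1) = \<i>" unfolding chi_et by (simp add: field_simps)
  have "(\<Sum>j<(5::nat). ((om ^ 2) ^ j - ((om ^ 4) ^ 2) ^ j) * om ^ j) = 0"
    unfolding sum_lt5 using om5 omS by algebra
  then show "chi om (etilde 2) = 0" unfolding chi_et by simp
  have "(\<Sum>j<(5::nat). ((om ^ 1) ^ j - ((om ^ 4) ^ 1) ^ j) * (om^2) ^ j) = 0"
    unfolding sum_lt5 using om5 omS by algebra
  then show "chi (om^2) (etilde 1) = 0" unfolding chi_et by simp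
  have "(\<Sum>j<(5::nat). ((om ^ 2) ^ j - ((om ^ 4) ^ 2) ^ j) * (om^2) ^ j) = -5"
    unfolding sum_lt5 using om5 omS by algebra
  then show "chi (om^2) (etilde 2) = \<i>" unfolding chi_et by (simp add: field_simps)
qed

lemma chi_cnj: "chi (cnj z) d = cnj (chi z d)"
  by (simp add: chi_def)

lemma chi_inj:
  assumes "chi 1 d = 0" "chi om d = 0" "chi (om^2) d = 0" "chi (om^3) d = 0" "chi (om^4) d = 0"
  shows "d = 0"
proof -
  have e: "5 * of_real (d$0) = chi 1 d + chi om d + chi (om^2) d + chi (om^3) d + chi (om^4) d"
    unfolding chi_def power_one mult_1_right using om5 omS by algebra
  have c1: "chi 1 d = of_real (d$0) + of_real (d$1) + of_real (d$2) + of_real (d$3) + of_real (d$4)"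
    unfolding chi_def by simp
  have e1: "5 * of_real (d$1) = chi 1 d + om^4 * chi om d + om^8 * chi (om^2) d + om^12 * chi (om^3) d + om^16 * chi (om^4) d"
    unfolding c1 unfolding chi_def using om5 omS by algebra
  have e2: "5 * of_real (d$2) = chi 1 d + om^3 * chi om d + om^6 * chi (om^2) d + om^9 * chi (om^3) d + om^12 * chi (om^4) d"
    unfolding c1 unfolding chi_def using om5 omS by algebra
  have e3: "5 * of_real (d$3) = chi 1 d + om^2 * chi om d + om^4 * chi (om^2) d + om^6 * chi (om^3) d + om^8 * chi (om^4) d"
    unfolding c1 unfolding chi_def using om5 omS by algebra
  have e4: "5 * of_real (d$4) = chi 1 d + om * chi om d + om^2 * chi (om^2) d + om^3 * chi (om^3) d + om^4 * chi (om^4) d"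
    unfolding c1 unfolding chi_def using om5 omS by algebra
  show ?thesis
    by (rule vec5_eqI) (use e e1 e2 e3 e4 assms in simp_all)
qed

lemma chi_W:
  "chi z ((Lr / 5) *\<^sub>R (hc5 1 + hc5 2 + hc5 3 + hc5 4)
           + Mr *\<^sub>R ( a *\<^sub>R (hc5 1 + hc5 4) - b *\<^sub>R (hc5 2 + hc5 3))
           + p1 *\<^sub>R etilde 1 + p2 *\<^sub>R etilde 2)
   = of_real (Lr/5) * (z + z^2 + z^3 + z^4) + of_real Mr * (of_real a * (z + z^4) - of_real b * (z^2 + z^3))
     + of_real p1 * chi z (etilde 1) + of_real p2 * chi z (etilde 2)"
  by (simp only: chi_add chi_diff chi_scaleR chi_hc5)

theorem mainTheorem6:
  fixes u :: tc5 and theta psi phi1 phi2 :: real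
  assumes theta: "0 < theta" "theta < pi/2" "tan theta = sqrt 2 * rhok 1 u / vplus u"
      and psi: "0 < psi" "psi < pi/2" "tan psi = rhok 1 u / rhok 2 u"
      and phi1: "0 \<le> phi1" "phi1 < 2*pi" "cos phi1 = vk 1 u / rhok 1 u" "sin phi1 = vtk 1 u / rhok 1 u"
      and phi2: "0 \<le> phi2" "phi2 < 2*pi" "cos phi2 = vk 2 u / rhok 2 u" "sin phi2 = vtk 2 u / rhok 2 u"
  shows "u = amp5 u *\<^sub>R exp5
           ( (ln (sqrt 2 / tan theta) / 5) *\<^sub>R (hc5 1 + hc5 2 + hc5 3 + hc5 4)
           + ln (tan psi) *\<^sub>R ( ((sqrt 5 + 1) / 10) *\<^sub>R (hc5 1 + hc5 4)
                                 - ((sqrt 5 - 1) / 10) *\<^sub>R (hc5 2 + hc5 3))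
           + phi1 *\<^sub>R etilde 1 + phi2 *\<^sub>R etilde 2)"
proof -
  define A where "A = vplus u"
  define r1 where "r1 = rhok 1 u"
  define r2 where "r2 = rhok 2 u"
  define Lr where "Lr = ln (sqrt 2 / tan theta)"
  define Mr where "Mr = ln (tan psi)"
  define a where "a = (sqrt 5 + 1) / 10"
  define b where "b = (sqrt 5 - 1) / 10"
  define amp where "amp = amp5 u"
  define W where "W = (Lr / 5) *\<^sub>R (hc5 1 + hc5 2 + hc5 3 + hc5 4)
           + Mr *\<^sub>R ( a *\<^sub>R (hc5 1 + hc5 4) - b *\<^sub>R (hc5 2 + hc5 3))
           + phi1 *\<^sub>R etilde 1 + phi2 *\<^sub>R etilde 2"
  have tt: "tan theta > 0" using tan_gt_zero[OF theta(1) theta(2)] .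
  have tp: "tan psi > 0" using tan_gt_zero[OF psi(1) psi(2)] .
  have r1nn: "r1 \<ge> 0" unfolding r1_def rhok_def by simp
  have r2nn: "r2 \<ge> 0" unfolding r2_def rhok_def by simp
  have r1p: "r1 > 0" using tt theta(3) r1nn unfolding r1_def by (cases "rhok 1 u = 0") auto
  have Ap: "A > 0"
  proof -
    have "sqrt 2 * r1 / A > 0" using tt unfolding theta(3) r1_def A_def .
    moreover have "sqrt 2 * r1 > 0" using r1p by simp
    ultimately show ?thesis by (simp add: zero_less_divide_iff)
  qed
  have r2p: "r2 > 0" using tp psi(3) r2nn unfolding r2_def r1_def by (cases "rhok 2 u = 0") auto
  have Lv: "Lr = ln A - ln r1"
  proof -
    have "sqrt 2 / tan theta = A / r1" unfolding theta(3) A_def[symmetric] r1_def[symmetric]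
      using r1p Ap by (simp add: field_simps)
    then show ?thesis unfolding Lr_def using r1p Ap by (simp add: ln_div)
  qed
  have Mv: "Mr = ln r1 - ln r2"
    unfolding Mr_def psi(3) r1_def[symmetric] r2_def[symmetric] using r1p r2p by (simp add: ln_div)
  have ampv: "amp = exp ((ln A + 2 * ln r1 + 2 * ln r2) / 5)"
  proof -
    have pos: "A * r1^2 * r2^2 > 0" using Ap r1p r2p by simp
    have "amp = (A * r1^2 * r2^2) powr (1/5)"
      unfolding amp_def amp5_def A_def[symmetric] r1_def[symmetric] r2_def[symmetric]
      using pos by (simp add: root_powr_inverse)
    also have "\<dots> = exp ((ln A + 2 * ln r1 + 2 * ln r2) / 5)"
      using pos Ap r1p r2p by (simp add: powr_def ln_mult ln_realpow)
    finally show ?thesis .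
  qed
  have s5: "sqrt 5 * sqrt 5 = 5" by simp
  define D where "D = u - amp *\<^sub>R exp5 W"
  have chiD: "chi z D = chi z u - of_real amp * exp (chi z W)" if "z^5 = 1" for z
    unfolding D_def chi_diff chi_scaleR chi_exp5[OF that] ..
  have D1: "chi 1 D = 0"
  proof -
    have "chi 1 W = of_real (4/5 * Lr + 2/5 * Mr)"
      unfolding W_def chi_W et_vals a_def b_def by (simp add: field_simps)
    then have "exp (chi 1 W) = of_real (exp (4/5 * Lr + 2/5 * Mr))" by (simp only: exp_of_real)
    then have "chi 1 D = of_real (A - amp * exp (4/5 * Lr + 2/5 * Mr))"
      using chiD[of 1] vplus_chi[of u] unfolding A_def by simp
    also have "amp * exp (4/5 * Lr + 2/5 * Mr) = A"
      unfolding ampv Lv Mv mult_exp_exp using Ap by (simp add: field_simps)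
    finally show ?thesis by simp
  qed
  have om5': "(om^2)^5 = 1" by (metis om5 power_mult_distrib power_one power_mult mult.commute)
  have Dom: "chi om D = 0"
  proof -
    have sumz: "om + om^2 + om^3 + om^4 = -1" using omS by algebra
    have z23: "om^2 + om^3 = -1 - of_real cc" using omS cc_om by algebra
    have "chi om W = of_real (- Lr/5 + Mr * (a * cc + b * (1 + cc))) + \<i> * of_real phi1"
      unfolding W_def chi_W et_vals sumz cc_om z23 by (simp add: algebra_simps)
    also have "a * cc + b * (1 + cc) = 2/5"
      unfolding a_def b_def cc_val by (simp add: field_simps s5)
    finally have w: "chi om W = of_real (- Lr/5 + Mr * (2/5)) + \<i> * of_real phi1" .
    have u1: "chi om u = of_real r1 * cis phi1"
      proof -
      have a1: "vk 1 u = r1 * cos phi1" using phi1(3) r1p unfolding r1_def by simp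
      have a2: "vtk 1 u = r1 * sin phi1" using phi1(4) r1p unfolding r1_def by simp
      have "chi (om^1) u = of_real (r1 * cos phi1) + \<i> * of_real (r1 * sin phi1)"
        using vk_chi[of 1 u] unfolding a1 a2 by simp
      then show ?thesis by (simp add: cis_cs algebra_simps)
    qed
    have ra: "amp * exp (- Lr/5 + Mr * (2/5)) = r1"
      unfolding ampv Lv Mv mult_exp_exp using r1p by (simp add: field_simps)
    have e: "exp (chi om W) = of_real (exp (- Lr/5 + Mr * (2/5))) * cis phi1"
      unfolding w by (simp only: exp_add exp_of_real cis_conv_exp)
    have f: "of_real amp * of_real (exp (- Lr/5 + Mr * (2/5))) = (of_real r1 :: complex)"
      using ra by (metis of_real_mult)
    have "chi om D = of_real r1 * cis phi1 - (of_real amp * of_real (exp (- Lr/5 + Mr * (2/5)))) * cis phi1"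
      by (simp only: chiD[OF om5] e u1 mult.assoc)
    then show ?thesis by (simp only: f) simp
  qed
  have Dom2: "chi (om^2) D = 0"
  proof -
    have sumz: "om^2 + (om^2)^2 + (om^2)^3 + (om^2)^4 = -1" using omS om5 by algebra
    have z14: "om^2 + (om^2)^4 = -1 - of_real cc" using omS om5 cc_om by algebra
    have z23: "(om^2)^2 + (om^2)^3 = of_real cc" using om5 cc_om by algebra
    have "chi (om^2) W = of_real (- Lr/5 + Mr * (- a * (1 + cc) - b * cc)) + \<i> * of_real phi2"
      unfolding W_def chi_W et_vals sumz z14 z23 by (simp add: algebra_simps)
    also have "- a * (1 + cc) - b * cc = - 3/5"
      unfolding a_def b_def cc_val by (simp add: field_simps s5)
    finally have w: "chi (om^2) W = of_real (- Lr/5 + Mr * (-3/5)) + \<i> * of_real phi2" .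
    have u1: "chi (om^2) u = of_real r2 * cis phi2"
      proof -
      have a1: "vk 2 u = r2 * cos phi2" using phi2(3) r2p unfolding r2_def by simp
      have a2: "vtk 2 u = r2 * sin phi2" using phi2(4) r2p unfolding r2_def by simp
      have "chi (om^2) u = of_real (r2 * cos phi2) + \<i> * of_real (r2 * sin phi2)"
        using vk_chi[of 2 u] unfolding a1 a2 by simp
      then show ?thesis by (simp add: cis_cs algebra_simps)
    qed
    have ra: "amp * exp (- Lr/5 + Mr * (-3/5)) = r2"
      unfolding ampv Lv Mv mult_exp_exp using r2p by (simp add: field_simps)
    have e: "exp (chi (om^2) W) = of_real (exp (- Lr/5 + Mr * (-3/5))) * cis phi2"
      unfolding w by (simp only: exp_add exp_of_real cis_conv_exp)
    have f: "of_real amp * of_real (exp (- Lr/5 + Mr * (-3/5))) = (of_real r2 :: complex)"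
      using ra by (metis of_real_mult)
    have "chi (om^2) D = of_real r2 * cis phi2 - (of_real amp * of_real (exp (- Lr/5 + Mr * (-3/5)))) * cis phi2"
      by (simp only: chiD[OF om5'] e u1 mult.assoc)
    then show ?thesis by (simp only: f) simp
  qed
  have Dom4: "chi (om^4) D = 0"
    using chi_cnj[of om D] Dom unfolding om_cnj by simp
  have Dom3: "chi (om^3) D = 0"
  proof -
    have "cnj (om^2) = om^3" unfolding complex_cnj_power om_cnj using om5 by algebra
    then show ?thesis using chi_cnj[of "om^2" D] Dom2 by simp
  qed
  have "D = 0" using chi_inj D1 Dom Dom2 Dom3 Dom4 by blast
  then show ?thesis
    unfolding D_def W_def amp_def Lr_def Mr_def a_def b_def by simp
qed

end
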